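(* If $G$ is a connected graph with at least one edge, with girth at least five and with no vertices of degree one, then $KB_e(G)\cong G$.
   Context: All graphs are finite, simple and undirected. The girth of a graph is the length of a shortest cycle (infinite if acyclic). A biclique of a graph $G$ is a maximal (with respect to inclusion) induced subgraph of $G$ that is a complete bipartite graph $K_{p,q}$ with $p,q\ge 1$. The edge-biclique graph $KB_e(G)$ is the graph with one vertex for each biclique of $G$, in which two distinct vertices are adjacent if and only if the corresponding bicliques have at least one edge in common. *)

theory Defs
  imports Main "HOL-Library.Extended_Nat"
begin

definition simple_graph :: "'a set \<Rightarrow> 'a set set \<Rightarrow> bool" where
  "simple_graph V E \<longleftrightarrow> finite V \<and>
     (\<forall>e\<in>E. \<exists>u v. e = {u, v} \<and> u \<noteq> v \<and> u \<in> V \<and> v \<in> V)"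

definition adj :: "'a set set \<Rightarrow> 'a \<Rightarrow> 'a \<Rightarrow> bool" where
  "adj E u v \<longleftrightarrow> {u, v} \<in> E"

definition degree :: "'a set \<Rightarrow> 'a set set \<Rightarrow> 'a \<Rightarrow> nat" where
  "degree V E v = card {u \<in> V. adj E u v}"

definition connected_graph :: "'a set \<Rightarrow> 'a set set \<Rightarrow> bool" where
  "connected_graph V E \<longleftrightarrow>
     (\<forall>u\<in>V. \<forall>v\<in>V. (\<lambda>x y. x \<in> V \<and> y \<in> V \<and> adj E x y)\<^sup>*\<^sup>* u v)"

definition has_cycle_of_length :: "'a set \<Rightarrow> 'a set set \<Rightarrow> nat \<Rightarrow> bool" where
  "has_cycle_of_length V E k \<longleftrightarrow> 3 \<le> k \<and>
     (\<exists>vs. length vs = k \<and> distinct vs \<and> set vs \<subseteq> V \<and>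
        (\<forall>i. Suc i < k \<longrightarrow> adj E (vs ! i) (vs ! Suc i)) \<and>
        adj E (vs ! (k - 1)) (vs ! 0))"

definition girth :: "'a set \<Rightarrow> 'a set set \<Rightarrow> enat" where
  "girth V E = (INF k \<in> {k. has_cycle_of_length V E k}. enat k)"

definition induces_complete_bipartite :: "'a set \<Rightarrow> 'a set set \<Rightarrow> 'a set \<Rightarrow> bool" where
  "induces_complete_bipartite V E S \<longleftrightarrow> S \<subseteq> V \<and>
     (\<exists>X Y. S = X \<union> Y \<and> X \<inter> Y = {} \<and> X \<noteq> {} \<and> Y \<noteq> {} \<and>
        (\<forall>u\<in>S. \<forall>v\<in>S. adj E u v \<longleftrightarrow> (u \<in> X \<and> v \<in> Y) \<or> (u \<in> Y \<and> v \<in> X)))"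

text \<open>A biclique (identified with its vertex set): a maximal (w.r.t. inclusion) induced
  complete bipartite subgraph.\<close>
definition biclique :: "'a set \<Rightarrow> 'a set set \<Rightarrow> 'a set \<Rightarrow> bool" where
  "biclique V E S \<longleftrightarrow> induces_complete_bipartite V E S \<and>
     (\<forall>T. induces_complete_bipartite V E T \<and> S \<subseteq> T \<longrightarrow> T = S)"

definition induced_edges :: "'a set set \<Rightarrow> 'a set \<Rightarrow> 'a set set" where
  "induced_edges E S = {e \<in> E. e \<subseteq> S}"

definition KBe_vertices :: "'a set \<Rightarrow> 'a set set \<Rightarrow> 'a set set" where
  "KBe_vertices V E = {S. biclique V E S}"

definition KBe_edges :: "'a set \<Rightarrow> 'a set set \<Rightarrow> 'a set set set" where
  "KBe_edges V E = {{B1, B2} | B1 B2. biclique V E B1 \<and> biclique V E B2 \<and> B1 \<noteq> B2 \<and>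
      induced_edges E B1 \<inter> induced_edges E B2 \<noteq> {}}"

definition graph_iso :: "'a set \<Rightarrow> 'a set set \<Rightarrow> 'b set \<Rightarrow> 'b set set \<Rightarrow> bool" where
  "graph_iso V1 E1 V2 E2 \<longleftrightarrow>
     (\<exists>f. bij_betw f V1 V2 \<and> (\<forall>u\<in>V1. \<forall>v\<in>V1. {u, v} \<in> E1 \<longleftrightarrow> {f u, f v} \<in> E2))"

end

theory Submission
  imports Defs
begin

lemma adj_sym: "adj E u v \<longleftrightarrow> adj E v u"
  unfolding adj_def by (simp add: insert_commute)

lemma adj_V: "simple_graph V E \<Longrightarrow> adj E u v \<Longrightarrow> u \<in> V \<and> v \<in> V \<and> u \<noteq> v"
  unfolding adj_def simple_graph_def by (metis doubleton_eq_iff)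

lemma no_short_cycle:
  assumes "girth V E \<ge> 5" "k < 5" shows "\<not> has_cycle_of_length V E k"
proof
  assume "has_cycle_of_length V E k"
  then have "girth V E \<le> enat k" unfolding girth_def by (meson INF_lower mem_Collect_eq)
  with assms show False
    by (metis enat_ord_simps(2) leD numeral_eq_enat order_trans)
qed

locale G =
  fixes V :: "'a set" and E :: "'a set set"
  assumes sg: "simple_graph V E"
    and notri: "\<And>a b c. adj E a b \<Longrightarrow> adj E b c \<Longrightarrow> adj E a c \<Longrightarrow> False"
    and noc4: "\<And>a b c d. adj E a b \<Longrightarrow> adj E b c \<Longrightarrow> adj E c d \<Longrightarrow> adj E d a
                  \<Longrightarrow> a \<noteq> c \<Longrightarrow> b \<noteq> d \<Longrightarrow> False"
    and deg2: "\<And>v. v \<in> V \<Longrightarrow> \<exists>a b. a \<noteq> b \<and> adj E v a \<and> adj E v b"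
begin

definition C where "C v = insert v {u. adj E v u}"

lemma Cv_cb: assumes "v \<in> V" shows "induces_complete_bipartite V E (C v)"
proof -
  obtain a b where ab: "a \<noteq> b" "adj E v a" "adj E v b" using deg2[OF assms] by blast
  have sub: "C v \<subseteq> V" using assms adj_V[OF sg] unfolding C_def by blast
  have nv: "v \<notin> {u. adj E v u}" using adj_V[OF sg] by blast
  have h1: "C v = {v} \<union> {u. adj E v u}" unfolding C_def by blast
  have h2: "{v} \<inter> {u. adj E v u} = {}" using nv by blast
  have h3: "{u. adj E v u} \<noteq> {}" using ab by blast
  have h4: "\<forall>u\<in>C v. \<forall>w\<in>C v. adj E u w = (u \<in> {v} \<and> w \<in> {u. adj E v u} \<or> u \<in> {u. adj E v u} \<and> w \<in> {v})"
  proof (intro ballI)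
    fix u w assume u: "u \<in> C v" and w: "w \<in> C v"
    show "adj E u w = (u \<in> {v} \<and> w \<in> {u. adj E v u} \<or> u \<in> {u. adj E v u} \<and> w \<in> {v})"
    proof (cases "u = v")
      case True thus ?thesis using adj_V[OF sg, of v v] by auto
    next
      case uv: False
      hence au: "adj E v u" using u unfolding C_def by auto
      show ?thesis
      proof (cases "w = v")
        case True thus ?thesis using uv au adj_sym[of E u v] by auto
      next
        case False
        hence "adj E v w" using w unfolding C_def by auto
        thus ?thesis using notri[of u v w] au adj_sym[of E u v] uv False by auto
      qed
    qed
  qed
  show ?thesis unfolding induces_complete_bipartite_def by (intro conjI sub exI[of _ "{v}"] exI[of _ "{u. adj E v u}"] h1 h2 h3 h4 insert_not_empty)
qed

lemma star_sub_aux: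
  assumes "T = X \<union> Y" "\<forall>u\<in>T. \<forall>v\<in>T. adj E u v \<longleftrightarrow> (u \<in> X \<and> v \<in> Y) \<or> (u \<in> Y \<and> v \<in> X)"
    "X \<inter> Y = {}" "v \<in> X" "a \<in> T" "b \<in> T" "adj E v a" "adj E v b" "a \<noteq> b"
  shows "T \<subseteq> C v"
proof
  fix t assume t: "t \<in> T"
  have aY: "a \<in> Y" "b \<in> Y" using assms by blast+
  show "t \<in> C v"
  proof (cases "t \<in> X")
    case True
    show ?thesis
    proof (rule ccontr)
      assume "t \<notin> C v"
      hence "t \<noteq> v" unfolding C_def by blast
      moreover have "adj E t a" "adj E t b" using assms True aY t by blast+
      ultimately show False using noc4[of t a v b] assms adj_sym by metis
    qed
  next
    case False
    hence "t \<in> Y" using assms t by blast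
    hence "adj E v t" using assms t by blast
    thus ?thesis unfolding C_def by blast
  qed
qed

lemma star_sub:
  assumes "induces_complete_bipartite V E T" "v \<in> T" "a \<in> T" "b \<in> T"
    "adj E v a" "adj E v b" "a \<noteq> b"
  shows "T \<subseteq> C v"
proof -
  obtain X Y where XY: "T = X \<union> Y" "X \<inter> Y = {}"
    "\<forall>u\<in>T. \<forall>v\<in>T. adj E u v \<longleftrightarrow> (u \<in> X \<and> v \<in> Y) \<or> (u \<in> Y \<and> v \<in> X)"
    using assms(1) unfolding induces_complete_bipartite_def by metis
  show ?thesis
  proof (cases "v \<in> X")
    case True
    show ?thesis by (rule star_sub_aux[OF XY(1) XY(3) XY(2) True assms(3-7)])
  next
    case False
    hence "v \<in> Y" using XY assms by blast
    moreover have "T = Y \<union> X" "Y \<inter> X = {}" using XY by blast+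
    moreover have "\<forall>u\<in>T. \<forall>v\<in>T. adj E u v \<longleftrightarrow> (u \<in> Y \<and> v \<in> X) \<or> (u \<in> X \<and> v \<in> Y)"
      using XY(3) by blast
    ultimately show ?thesis using star_sub_aux[of T Y X v a b] assms by blast
  qed
qed

lemma Cv_biclique: assumes "v \<in> V" shows "biclique V E (C v)"
  unfolding biclique_def
proof (intro conjI allI impI Cv_cb[OF assms])
  fix T assume T: "induces_complete_bipartite V E T \<and> C v \<subseteq> T"
  obtain a b where ab: "a \<noteq> b" "adj E v a" "adj E v b" using deg2[OF assms] by blast
  have "v \<in> T" "a \<in> T" "b \<in> T" using T ab unfolding C_def by auto
  hence "T \<subseteq> C v" using star_sub T ab by blast
  thus "T = C v" using T by blast
qed

lemma biclique_C: assumes "biclique V E S" shows "\<exists>v\<in>V. S = C v"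
proof -
  have cb: "induces_complete_bipartite V E S" and mx: "\<And>T. induces_complete_bipartite V E T \<Longrightarrow> S \<subseteq> T \<Longrightarrow> T = S"
    using assms unfolding biclique_def by auto
  obtain X Y where XY: "S \<subseteq> V" "S = X \<union> Y" "X \<inter> Y = {}" "X \<noteq> {}" "Y \<noteq> {}"
    "\<forall>u\<in>S. \<forall>v\<in>S. adj E u v \<longleftrightarrow> (u \<in> X \<and> v \<in> Y) \<or> (u \<in> Y \<and> v \<in> X)"
    using cb unfolding induces_complete_bipartite_def by metis
  obtain x y where xy: "x \<in> X" "y \<in> Y" using XY by blast
  show ?thesis
  proof (cases "X \<subseteq> {x}")
    case True
    have "S \<subseteq> C x"
    proof
      fix s assume s: "s \<in> S"
      show "s \<in> C x"
      proof (cases "s \<in> X")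
        case True thus ?thesis using \<open>X \<subseteq> {x}\<close> unfolding C_def by blast
      next
        case False hence "s \<in> Y" using XY s by blast
        hence "adj E x s" using XY xy s by blast
        thus ?thesis unfolding C_def by blast
      qed
    qed
    moreover have "x \<in> V" using XY xy by blast
    ultimately show ?thesis using mx[OF Cv_cb] by metis
  next
    case False
    then obtain x2 where x2: "x2 \<in> X" "x2 \<noteq> x" by blast
    have "S \<subseteq> C y"
    proof
      fix s assume s: "s \<in> S"
      show "s \<in> C y"
      proof (cases "s \<in> X")
        case True
        hence "adj E y s" using XY xy s by blast
        thus ?thesis unfolding C_def by blast
      next
        case False hence sY: "s \<in> Y" using XY s by blast
        show ?thesis
        proof (rule ccontr)
          assume "s \<notin> C y" hence "s \<noteq> y" unfolding C_def by blast
          moreover have "adj E x y" "adj E y x2" "adj E x2 s" "adj E s x"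
            using XY xy x2 sY by blast+
          ultimately show False using noc4[of x y x2 s] x2 by metis
        qed
      qed
    qed
    moreover have "y \<in> V" using XY xy by blast
    ultimately show ?thesis using mx[OF Cv_cb] by metis
  qed
qed

lemma C_inj: "inj_on C V"
proof
  fix v w assume vw: "v \<in> V" "w \<in> V" "C v = C w"
  show "v = w"
  proof (rule ccontr)
    assume ne: "v \<noteq> w"
    hence "adj E v w" using vw unfolding C_def by (metis insert_iff mem_Collect_eq)
    obtain a b where ab: "a \<noteq> b" "adj E v a" "adj E v b" using deg2 vw by blast
    obtain c where c: "adj E v c" "c \<noteq> w" using ab by metis
    hence "c \<in> C w" using vw unfolding C_def by auto
    hence "adj E w c" using c unfolding C_def by auto
    thus False using notri \<open>adj E v w\<close> c by blast
  qed
qed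

lemma edge_in_C: assumes "e \<in> E" "e \<subseteq> C v" shows "\<exists>q. e = {v, q} \<and> adj E v q"
proof -
  obtain p q where pq: "e = {p, q}" "p \<noteq> q" using assms sg unfolding simple_graph_def by blast
  have apq: "adj E p q" using assms pq unfolding adj_def by simp
  show ?thesis
  proof (cases "p = v")
    case True thus ?thesis using pq apq by blast
  next
    case False
    show ?thesis
    proof (cases "q = v")
      case True thus ?thesis using pq apq adj_sym by (metis insert_commute)
    next
      case False
      hence "adj E v p" "adj E v q" using \<open>p \<noteq> v\<close> assms pq unfolding C_def by auto
      thus ?thesis using notri apq by blast
    qed
  qed
qed

lemma vert: "KBe_vertices V E = C ` V"
  unfolding KBe_vertices_def using biclique_C Cv_biclique by blast

lemma edge_iff: assumes "v \<in> V" "w \<in> V"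
  shows "{C v, C w} \<in> KBe_edges V E \<longleftrightarrow> {v, w} \<in> E"
proof
  assume vw: "{v, w} \<in> E"
  hence a: "adj E v w" unfolding adj_def .
  hence a2: "adj E w v" using adj_sym[of E v w] by simp
  hence ne: "v \<noteq> w" using adj_V[OF sg] by blast
  hence ne2: "C v \<noteq> C w" using C_inj assms unfolding inj_on_def by blast
  have s1: "{v, w} \<subseteq> C v" using a unfolding C_def by simp
  have s2: "{v, w} \<subseteq> C w" using a2 unfolding C_def by simp
  have i: "{v, w} \<in> induced_edges E (C v) \<inter> induced_edges E (C w)"
    using vw s1 s2 unfolding induced_edges_def by simp
  have b1: "biclique V E (C v)" and b2: "biclique V E (C w)" using Cv_biclique assms by auto
  show "{C v, C w} \<in> KBe_edges V E"
    unfolding KBe_edges_def mem_Collect_eq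
    by (rule exI[of _ "C v"], rule exI[of _ "C w"], intro conjI refl b1 b2 ne2, use i in blast)
next
  assume "{C v, C w} \<in> KBe_edges V E"
  hence "\<exists>B1 B2. {C v, C w} = {B1, B2} \<and> biclique V E B1 \<and> biclique V E B2 \<and> B1 \<noteq> B2 \<and>
      induced_edges E B1 \<inter> induced_edges E B2 \<noteq> {}" unfolding KBe_edges_def by (simp only: mem_Collect_eq)
  then obtain B1 B2 where B0: "{C v, C w} = {B1, B2}" "B1 \<noteq> B2" "induced_edges E B1 \<inter> induced_edges E B2 \<noteq> {}"
    by (elim exE conjE) (intro that)
  then obtain e where "e \<in> induced_edges E B1 \<inter> induced_edges E B2" by (meson ex_in_conv)
  with B0 have B: "{C v, C w} = {B1, B2}" "B1 \<noteq> B2" "e \<in> induced_edges E B1" "e \<in> induced_edges E B2" by auto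
  have or: "(C v = B1 \<and> C w = B2) \<or> (C v = B2 \<and> C w = B1)" using B(1) by (simp add: doubleton_eq_iff)
  have "C v \<noteq> C w" using or B(2) by blast
  hence ne: "v \<noteq> w" by blast
  have eE: "e \<in> E" and e1: "e \<subseteq> C v" and e2: "e \<subseteq> C w"
    using or B(3,4) unfolding induced_edges_def by auto
  obtain q where q: "e = {v, q}" using edge_in_C[OF eE e1] by blast
  obtain r where r: "e = {w, r}" using edge_in_C[OF eE e2] by blast
  have "e = {v, w}" using q r ne by (simp add: doubleton_eq_iff)
  thus "{v, w} \<in> E" using eE by simp
qed

lemma iso: "graph_iso (KBe_vertices V E) (KBe_edges V E) V E"
proof -
  define f where "f = inv_into V C"
  have b: "bij_betw f (C ` V) V" unfolding f_def
    by (rule bij_betw_inv_into) (rule inj_on_imp_bij_betw[OF C_inj])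
  show ?thesis unfolding graph_iso_def vert
  proof (intro exI conjI ballI, rule b)
    fix u v assume "u \<in> C ` V" "v \<in> C ` V"
    then obtain a b where "a \<in> V" "b \<in> V" "u = C a" "v = C b" by blast
    moreover have "f (C a) = a" "f (C b) = b" unfolding f_def using C_inj calculation
      by (auto intro: inv_into_f_f)
    ultimately show "{u, v} \<in> KBe_edges V E \<longleftrightarrow> {f u, f v} \<in> E" using edge_iff by simp
  qed
qed

end

lemma cyc3:
  assumes sg: "simple_graph V E" and h: "adj E a b" "adj E b c" "adj E c a"
  shows "has_cycle_of_length V E 3"
proof -
  have d: "a \<noteq> b" "b \<noteq> c" "c \<noteq> a" "a \<in> V" "b \<in> V" "c \<in> V"
    using adj_V[OF sg h(1)] adj_V[OF sg h(2)] adj_V[OF sg h(3)] by auto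
  have st: "\<forall>i. Suc i < 3 \<longrightarrow> adj E ([a,b,c] ! i) ([a,b,c] ! Suc i)"
  proof (intro allI impI)
    fix i :: nat assume "Suc i < 3"
    hence "i = 0 \<or> i = 1" by auto
    thus "adj E ([a,b,c] ! i) ([a,b,c] ! Suc i)" using h by auto
  qed
  show ?thesis unfolding has_cycle_of_length_def
    apply (rule conjI, simp)
    apply (rule exI[of _ "[a,b,c]"])
    using d st h by simp
qed

lemma cyc4:
  assumes sg: "simple_graph V E" and h: "adj E a b" "adj E b c" "adj E c d" "adj E d a"
    and n: "a \<noteq> c" "b \<noteq> d"
  shows "has_cycle_of_length V E 4"
proof -
  have d: "a \<noteq> b" "b \<noteq> c" "c \<noteq> d" "d \<noteq> a" "a \<in> V" "b \<in> V" "c \<in> V" "d \<in> V"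
    using adj_V[OF sg h(1)] adj_V[OF sg h(2)] adj_V[OF sg h(3)] adj_V[OF sg h(4)] by auto
  have st: "\<forall>i. Suc i < 4 \<longrightarrow> adj E ([a,b,c,d] ! i) ([a,b,c,d] ! Suc i)"
  proof (intro allI impI)
    fix i :: nat assume "Suc i < 4"
    hence "i = 0 \<or> i = 1 \<or> i = 2" by auto
    thus "adj E ([a,b,c,d] ! i) ([a,b,c,d] ! Suc i)" using h by auto
  qed
  show ?thesis unfolding has_cycle_of_length_def
    apply (rule conjI, simp)
    apply (rule exI[of _ "[a,b,c,d]"])
    using d n st h by auto
qed

theorem mainTheorem6:
  fixes V :: "'a set" and E :: "'a set set"
  assumes "simple_graph V E"
    and "connected_graph V E"
    and "E \<noteq> {}"
    and "girth V E \<ge> 5"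
    and "\<forall>v\<in>V. degree V E v \<noteq> 1"
  shows "graph_iso (KBe_vertices V E) (KBe_edges V E) V E"
proof -
  note sg = assms(1)
  have notri: "False" if "adj E a b" "adj E b c" "adj E a c" for a b c
  proof -
    have "has_cycle_of_length V E 3" using cyc3[OF sg that(1,2)] that(3) adj_sym[of E a c] by simp
    thus False using no_short_cycle[OF assms(4)] by simp
  qed
  have noc4: "False" if "adj E a b" "adj E b c" "adj E c d" "adj E d a" "a \<noteq> c" "b \<noteq> d" for a b c d
  proof -
    have "has_cycle_of_length V E 4" using cyc4[OF sg that] .
    thus False using no_short_cycle[OF assms(4)] by simp
  qed
  have deg2: "\<exists>a b. a \<noteq> b \<and> adj E v a \<and> adj E v b" if v: "v \<in> V" for v
  proof -
    obtain e where "e \<in> E" using assms(3) by blast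
    then obtain p q where pq: "e = {p,q}" "p \<noteq> q" "p \<in> V" "q \<in> V" using sg unfolding simple_graph_def by blast
    have "\<exists>x. adj E v x"
    proof (cases "v = p")
      case True thus ?thesis using pq \<open>e \<in> E\<close> unfolding adj_def by blast
    next
      case False
      have "(\<lambda>x y. x \<in> V \<and> y \<in> V \<and> adj E x y)\<^sup>*\<^sup>* v p" using assms(2) v pq unfolding connected_graph_def by blast
      thus ?thesis using False by (cases rule: converse_rtranclpE) auto
    qed
    then obtain x where x: "adj E v x" by blast
    let ?N = "{u \<in> V. adj E u v}"
    have fin: "finite ?N" using sg unfolding simple_graph_def by simp
    have "x \<in> ?N" using x adj_V[OF sg] adj_sym[of E v x] by blast
    moreover have "card ?N \<noteq> 1" using assms(5) v unfolding degree_def by blast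
    ultimately obtain y where "y \<in> ?N" "y \<noteq> x"
    proof -
      assume r: "\<And>y. y \<in> ?N \<Longrightarrow> y \<noteq> x \<Longrightarrow> thesis"
      show thesis
      proof (rule ccontr)
        assume "\<not> thesis"
        hence "?N = {x}" using r \<open>x \<in> ?N\<close> by blast
        thus False using \<open>card ?N \<noteq> 1\<close> by simp
      qed
    qed
    thus ?thesis using x adj_sym[of E y v] by blast
  qed
  interpret G V E
    apply unfold_locales
       apply (rule sg)
      apply (rule notri; assumption)
     apply (rule noc4; assumption)
    by (rule deg2)
  show ?thesis by (rule iso)
qed

end
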